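(* Let $f:\mathbb{R}^n\to\mathbb{R}$ be $C^2$ with all eigenvalues of the Hessian $D^2f(x)$ lying in $[\mu,L]$ for every $x$, where $0<\mu\le L$, and let $x^*$ be a minimizer of $f$. Fix a step size $0<\eta\le\frac{2}{L+\mu}$, a window length $m\ge1$, a regularization parameter $\lambda>0$ and an initial point $x_0$, and let $(x_k)$ be generated by Anderson-accelerated gradient descent with relaxation parameter $\beta=1$ (described in the context), with $\nabla f(x_k)\ne0$. Suppose the iterates converge to $x^*$, so that $\|x_k-x^*\|$ is sufficiently small for large $k$. Then there is a sequence $o(k)$ with $o(k)\to0$ as $k\to\infty$ such that for all sufficiently large $k$, $$\frac{\|\nabla f(x_{k+1})\|}{\|\nabla f(x_k)\|}\le \delta_k(1-\eta\mu)+o(k),\qquad \delta_k:=\frac{\|\Pi_k\nabla f(x_k)\|}{\|\nabla f(x_k)\|}\le1,$$ where $\Pi_k=I-U_k(U_k^\top U_k+\lambda I)^{-1}U_k^\top$.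
   Context: Norms are Euclidean $\ell^2$ norms (operator norm for matrices). Let $G(x)=x-\eta\nabla f(x)$. Anderson-accelerated gradient descent (AA-GD) with $\beta=1$: set $x_1=G(x_0)$; for $k\ge1$, let $m_k=\min\{m,k\}$, let $U_k=[U_{k,k-m_k},\dots,U_{k,k-1}]\in\mathbb{R}^{n\times m_k}$ with columns $U_{k,j}=\nabla f(x_k)-\nabla f(x_j)$, compute the weights $(\alpha^k_{k-m_k},\dots,\alpha^k_{k-1})^\top=(U_k^\top U_k+\lambda I)^{-1}U_k^\top\nabla f(x_k)$ (the minimizer of $\|\nabla f(x_k)-U_k\alpha\|^2+\lambda\|\alpha\|^2$), set $\alpha^k_k=1-\sum_{j=k-m_k}^{k-1}\alpha^k_j$ (so the weights sum to one), and define $x_{k+1}=\sum_{j=k-m_k}^{k}\alpha^k_j G(x_j)$. *)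

theory Defs
  imports "HOL-Analysis.Analysis"
begin

text \<open>Real eigenvalue of a square matrix (the Hessian is symmetric, so all its eigenvalues are real).\<close>
definition is_eigenvalue :: "real^'n^'n \<Rightarrow> real \<Rightarrow> bool" where
  "is_eigenvalue A c \<longleftrightarrow> (\<exists>v. v \<noteq> 0 \<and> A *v v = c *\<^sub>R v)"

definition aa_window :: "nat \<Rightarrow> nat \<Rightarrow> nat set" where
  "aa_window m k = {k - min m k ..< k}"

definition aa_U :: "(real^'n \<Rightarrow> real^'n) \<Rightarrow> (nat \<Rightarrow> real^'n) \<Rightarrow> nat \<Rightarrow> nat \<Rightarrow> real^'n" where
  "aa_U df x k j = df (x k) - df (x j)"

text \<open>AA-GD with beta = 1. The weights alpha k j (j in the window) are the solution of
  (U_k^T U_k + lambda I) alpha = U_k^T grad f(x_k), written out entrywise; since the matrix is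
  positive definite this is exactly alpha = (U_k^T U_k + lambda I)^{-1} U_k^T grad f(x_k).\<close>
definition aa_gd :: "(real^'n \<Rightarrow> real^'n) \<Rightarrow> real \<Rightarrow> nat \<Rightarrow> real \<Rightarrow> real^'n
    \<Rightarrow> (nat \<Rightarrow> real^'n) \<Rightarrow> (nat \<Rightarrow> nat \<Rightarrow> real) \<Rightarrow> bool" where
  "aa_gd df \<eta> m lam x0 x \<alpha> \<longleftrightarrow>
     (let G = (\<lambda>y. y - \<eta> *\<^sub>R df y) in
      x 0 = x0 \<and> x 1 = G x0 \<and>
      (\<forall>k\<ge>1.
         (\<forall>i\<in>aa_window m k.
            (\<Sum>j\<in>aa_window m k. (aa_U df x k i \<bullet> aa_U df x k j) * \<alpha> k j) + lam * \<alpha> k i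
              = aa_U df x k i \<bullet> df (x k)) \<and>
         x (Suc k) = (\<Sum>j\<in>aa_window m k. \<alpha> k j *\<^sub>R G (x j))
                     + (1 - (\<Sum>j\<in>aa_window m k. \<alpha> k j)) *\<^sub>R G (x k)))"

text \<open>Pi_k grad f(x_k) = grad f(x_k) - U_k (U_k^T U_k + lambda I)^{-1} U_k^T grad f(x_k)
  = grad f(x_k) - U_k alpha^k.\<close>
definition aa_Pi_grad :: "(real^'n \<Rightarrow> real^'n) \<Rightarrow> nat \<Rightarrow> (nat \<Rightarrow> real^'n) \<Rightarrow> (nat \<Rightarrow> nat \<Rightarrow> real) \<Rightarrow> nat \<Rightarrow> real^'n" where
  "aa_Pi_grad df m x \<alpha> k = df (x k) - (\<Sum>j\<in>aa_window m k. \<alpha> k j *\<^sub>R aa_U df x k j)"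

end

theory Submission
  imports Defs
begin

lemma psd_cs:
  fixes B :: "real^'n \<Rightarrow> real^'n"
  assumes lin: "linear B" and psd: "\<And>w. 0 \<le> w \<bullet> B w" and sym: "\<And>x y. x \<bullet> B y = y \<bullet> B x"
  shows "(x \<bullet> B y)^2 \<le> (x \<bullet> B x) * (y \<bullet> B y)"
proof -
  define a where "a = x \<bullet> B x"
  define b where "b = x \<bullet> B y"
  define c where "c = y \<bullet> B y"
  have ex: "0 \<le> a + 2*t*b + t^2*c" for t
  proof -
    have "B (x + t *\<^sub>R y) = B x + t *\<^sub>R B y"
      using lin by (simp add: linear_add linear_scale)
    hence "(x + t *\<^sub>R y) \<bullet> B (x + t *\<^sub>R y) = a + 2*t*b + t^2*c"
      unfolding a_def b_def c_def using sym[of y x]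
      by (simp add: inner_add_left inner_add_right algebra_simps power2_eq_square)
    thus ?thesis using psd[of "x + t *\<^sub>R y"] by simp
  qed
  have c0: "0 \<le> c" unfolding c_def by (rule psd)
  show ?thesis
  proof (cases "c = 0")
    case True
    have "b = 0"
    proof (rule ccontr)
      assume "b \<noteq> 0"
      have "0 \<le> a + 2*(-(a+1)/(2*b))*b + (-(a+1)/(2*b))^2*c" by (rule ex)
      with True \<open>b \<noteq> 0\<close> show False by (simp add: field_simps)
    qed
    thus ?thesis using True unfolding a_def b_def c_def by simp
  next
    case False
    with c0 have cp: "c > 0" by simp
    have "0 \<le> a + 2*(-b/c)*b + (-b/c)^2*c" by (rule ex)
    hence "0 \<le> a - b^2/c" using cp by (simp add: field_simps power2_eq_square)
    hence "b^2 \<le> a*c" using cp by (simp add: field_simps)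
    thus ?thesis unfolding a_def b_def c_def .
  qed
qed

lemma psd_null:
  fixes B :: "real^'n \<Rightarrow> real^'n"
  assumes lin: "linear B" and psd: "\<And>w. 0 \<le> w \<bullet> B w" and sym: "\<And>x y. x \<bullet> B y = y \<bullet> B x"
    and z: "v \<bullet> B v = 0"
  shows "B v = 0"
proof -
  have "(B v \<bullet> B v)^2 \<le> (B v \<bullet> B (B v)) * (v \<bullet> B v)" by (rule psd_cs[OF lin psd sym])
  with z have "(B v \<bullet> B v)^2 \<le> 0" by simp
  thus ?thesis by simp
qed

lemma eig_min:
  fixes A :: "real^'n^'n"
  assumes sym: "\<And>u v. u \<bullet> (A *v v) = v \<bullet> (A *v u)"
  shows "\<exists>c. is_eigenvalue A c \<and> (\<forall>v. c * (v \<bullet> v) \<le> v \<bullet> (A *v v))"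
proof -
  have "\<exists>v0\<in>sphere (0::real^'n) 1. \<forall>v\<in>sphere 0 1. v0 \<bullet> (A *v v0) \<le> v \<bullet> (A *v v)"
  proof (rule continuous_attains_inf)
    show "compact (sphere (0::real^'n) 1)" by simp
    have "norm (axis undefined 1 :: real^'n) = 1" by simp
    thus "sphere (0::real^'n) 1 \<noteq> {}" unfolding sphere_def by (metis (mono_tags) dist_0_norm empty_iff mem_Collect_eq)
    show "continuous_on (sphere 0 1) (\<lambda>v::real^'n. v \<bullet> (A *v v))"
      by (intro continuous_intros continuous_on_subset[OF matrix_vector_mult_linear_continuous_on]) auto
  qed
  then obtain v0 where v0: "norm v0 = 1" and mn: "\<And>v. norm v = 1 \<Longrightarrow> v0 \<bullet> (A *v v0) \<le> v \<bullet> (A *v v)"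
    by auto
  define c where "c = v0 \<bullet> (A *v v0)"
  have ge: "c * (v \<bullet> v) \<le> v \<bullet> (A *v v)" for v
  proof (cases "v = 0")
    case True thus ?thesis by simp
  next
    case False
    define w where "w = (1/norm v) *\<^sub>R v"
    have "norm w = 1" using False by (simp add: w_def)
    hence "c \<le> w \<bullet> (A *v w)" using mn c_def by simp
    also have "w \<bullet> (A *v w) = (v \<bullet> (A *v v)) / (norm v)^2"
      by (simp add: w_def matrix_vector_mult_scaleR power2_eq_square)
    finally have "c * (norm v)^2 \<le> v \<bullet> (A *v v)" using False by (simp add: field_simps)
    thus ?thesis by (simp add: power2_norm_eq_inner)
  qed
  define B where "B = (\<lambda>w. A *v w - c *\<^sub>R w)"
  have lin: "linear B" unfolding B_def
    by (rule linearI) (auto simp: matrix_vector_right_distrib matrix_vector_mult_scaleR algebra_simps)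
  have "B v0 = 0"
  proof (rule psd_null[OF lin])
    show "0 \<le> w \<bullet> B w" for w using ge[of w] by (simp add: B_def inner_diff_right)
    show "x \<bullet> B y = y \<bullet> B x" for x y using sym[of x y] by (simp add: B_def inner_diff_right inner_commute)
    have "v0 \<bullet> v0 = 1" using v0 by (simp add: norm_eq_1)
    thus "v0 \<bullet> B v0 = 0" by (simp add: B_def inner_diff_right c_def)
  qed
  hence "A *v v0 = c *\<^sub>R v0" by (simp add: B_def)
  moreover have "v0 \<noteq> 0" using v0 by auto
  ultimately have "is_eigenvalue A c" unfolding is_eigenvalue_def by blast
  with ge show ?thesis by blast
qed


lemma eig_bounds:
  fixes A :: "real^'n^'n"
  assumes sym: "\<And>u v. u \<bullet> (A *v v) = v \<bullet> (A *v u)"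
    and eig: "\<And>c. is_eigenvalue A c \<Longrightarrow> \<mu> \<le> c \<and> c \<le> L"
  shows "\<mu> * (v \<bullet> v) \<le> v \<bullet> (A *v v)" "v \<bullet> (A *v v) \<le> L * (v \<bullet> v)"
proof -
  obtain c where c: "is_eigenvalue A c" "\<And>v. c * (v \<bullet> v) \<le> v \<bullet> (A *v v)"
    using eig_min[OF sym] by blast
  have "\<mu> \<le> c" using eig[OF c(1)] by simp
  moreover have "0 \<le> v \<bullet> v" by simp
  ultimately have "\<mu> * (v \<bullet> v) \<le> c * (v \<bullet> v)" by (rule mult_right_mono)
  thus "\<mu> * (v \<bullet> v) \<le> v \<bullet> (A *v v)" using c(2)[of v] by linarith
  have nA: "(-A) *v w = - (A *v w)" for w by (simp add: matrix_vector_mult_def vec_eq_iff sum_negf)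
  have sym2: "\<And>u v. u \<bullet> ((-A) *v v) = v \<bullet> ((-A) *v u)" using sym by (simp add: nA)
  obtain d where d: "is_eigenvalue (-A) d" "\<And>v. d * (v \<bullet> v) \<le> v \<bullet> ((-A) *v v)"
    using eig_min[OF sym2] by blast
  have "is_eigenvalue A (-d)" using d(1) unfolding is_eigenvalue_def nA
    by (metis minus_equation_iff scaleR_minus_left)
  hence "-d \<le> L" using eig by blast
  moreover have "0 \<le> v \<bullet> v" by simp
  ultimately have "(-d) * (v \<bullet> v) \<le> L * (v \<bullet> v)" by (rule mult_right_mono)
  thus "v \<bullet> (A *v v) \<le> L * (v \<bullet> v)" using d(2)[of v] by (simp add: nA)
qed

lemma contraction:
  fixes A :: "real^'n^'n"
  assumes sym: "\<And>u v. u \<bullet> (A *v v) = v \<bullet> (A *v u)"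
    and lo: "\<And>v. \<mu> * (v \<bullet> v) \<le> v \<bullet> (A *v v)" and hi: "\<And>v. v \<bullet> (A *v v) \<le> L * (v \<bullet> v)"
    and mu: "0 < \<mu>" "\<mu> \<le> L" and eta: "0 < \<eta>" "\<eta> \<le> 2 / (L + \<mu>)"
  shows "norm (v - \<eta> *\<^sub>R (A *v v)) \<le> (1 - \<eta> * \<mu>) * norm v"
proof -
  define B where "B = (\<lambda>w. A *v w - \<mu> *\<^sub>R w)"
  have lin: "linear B" unfolding B_def
    by (rule linearI) (auto simp: matrix_vector_right_distrib matrix_vector_mult_scaleR algebra_simps)
  have psd: "0 \<le> w \<bullet> B w" for w using lo[of w] by (simp add: B_def inner_diff_right)
  have symB: "x \<bullet> B y = y \<bullet> B x" for x y using sym[of x y] by (simp add: B_def inner_diff_right inner_commute)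
  have cs: "(B v \<bullet> B v)^2 \<le> (B v \<bullet> B (B v)) * (v \<bullet> B v)" by (rule psd_cs[OF lin psd symB])
  have up: "B v \<bullet> B (B v) \<le> (L - \<mu>) * (B v \<bullet> B v)"
  proof -
    have e1: "v \<bullet> (A *v (A *v v)) = (A *v v) \<bullet> (A *v v)" using sym[of v "A *v v"] by simp
    have e2: "(A *v v) \<bullet> v = v \<bullet> (A *v v)" by (simp add: inner_commute)
    have e3: "(A *v (A *v v)) \<bullet> v = (A *v v) \<bullet> (A *v v)" using e1 by (simp add: inner_commute)
    have e4: "(A *v v) \<bullet> (A *v (A *v v)) = (A *v (A *v v)) \<bullet> (A *v v)" by (simp add: inner_commute)
    define t where "t = (A *v v) \<bullet> (A *v (A *v v))"
    define a where "a = (A *v v) \<bullet> (A *v v)"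
    define p where "p = v \<bullet> (A *v v)"
    define N where "N = v \<bullet> v"
    have x1: "B v \<bullet> B (B v) = t - 3*\<mu>*a + 3*\<mu>^2*p - \<mu>^3*N"
      unfolding t_def a_def p_def N_def B_def
      by (simp add: inner_diff_left inner_diff_right matrix_vector_mult_diff_distrib matrix_vector_mult_scaleR e1 e2 e3 e4 power2_eq_square power3_eq_cube; simp only: ring_distribs; linarith)
    have x2: "B v \<bullet> B v = a - 2*\<mu>*p + \<mu>^2*N"
      unfolding t_def a_def p_def N_def B_def
      by (simp add: inner_diff_left inner_diff_right matrix_vector_mult_diff_distrib matrix_vector_mult_scaleR e1 e2 e3 e4 power2_eq_square power3_eq_cube; simp only: ring_distribs; linarith)
    have x3: "B v \<bullet> (A *v B v) = t - 2*\<mu>*a + \<mu>^2*p"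
      unfolding t_def a_def p_def N_def B_def
      by (simp add: inner_diff_left inner_diff_right matrix_vector_mult_diff_distrib matrix_vector_mult_scaleR e1 e2 e3 e4 power2_eq_square power3_eq_cube; simp only: ring_distribs; linarith)
    have "B v \<bullet> (A *v B v) \<le> L * (B v \<bullet> B v)" using hi[of "B v"] .
    hence "t - 2*\<mu>*a + \<mu>^2*p \<le> L * (B v \<bullet> B v)" using x3 by simp
    moreover have "(L - \<mu>) * (B v \<bullet> B v) = L * (B v \<bullet> B v) - \<mu> * (a - 2*\<mu>*p + \<mu>^2*N)"
      using x2 by (simp add: left_diff_distrib)
    moreover have "\<mu> * (a - 2*\<mu>*p + \<mu>^2*N) = \<mu>*a - 2*\<mu>^2*p + \<mu>^3*N"
      by (simp add: ring_distribs power2_eq_square power3_eq_cube)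
    ultimately show ?thesis using x1 by linarith
  qed
  have key: "B v \<bullet> B v \<le> (L - \<mu>) * (v \<bullet> B v)"
  proof (cases "B v \<bullet> B v = 0")
    case True thus ?thesis using psd[of v] mu by simp
  next
    case False
    hence pos: "B v \<bullet> B v > 0" by (metis inner_gt_zero_iff inner_eq_zero_iff)
    have "(B v \<bullet> B v)^2 \<le> (L - \<mu>) * (B v \<bullet> B v) * (v \<bullet> B v)"
      using cs up psd[of v] by (meson mult_right_mono order_trans)
    hence "(B v \<bullet> B v) * (B v \<bullet> B v) \<le> (B v \<bullet> B v) * ((L - \<mu>) * (v \<bullet> B v))"
      by (simp add: power2_eq_square algebra_simps)
    thus ?thesis using pos by simp
  qed
  define N where "N = v \<bullet> v"
  define q where "q = v \<bullet> (A *v v)"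
  define a where "a = (A *v v) \<bullet> (A *v v)"
  have k2: "a - 2*\<mu>*q + \<mu>^2 * N \<le> (L - \<mu>) * (q - \<mu> * N)"
    using key unfolding N_def q_def a_def B_def
    by (simp add: inner_diff_left inner_diff_right inner_commute algebra_simps power2_eq_square)
  have qlo: "\<mu> * N \<le> q" using lo unfolding N_def q_def by simp
  have e2: "\<eta> * (L + \<mu>) \<le> 2" using eta mu by (simp add: field_simps)
  have sq: "(v - \<eta> *\<^sub>R (A *v v)) \<bullet> (v - \<eta> *\<^sub>R (A *v v)) = N - 2*\<eta>*q + \<eta>^2 * a"
    unfolding N_def q_def a_def
    by (simp add: inner_diff_left inner_diff_right inner_commute algebra_simps power2_eq_square)
  have h1: "\<eta>^2 * a \<le> \<eta>^2 * ((L+\<mu>)*q - L*\<mu>*N)"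
    using k2 by (intro mult_left_mono) (auto simp: algebra_simps power2_eq_square)
  have h2: "0 \<le> (q - \<mu>*N) * (\<eta> * (2 - \<eta>*(L+\<mu>)))"
    using qlo e2 eta by (intro mult_nonneg_nonneg) auto
  have "N - 2*\<eta>*q + \<eta>^2 * a \<le> ((1 - \<eta>*\<mu>))^2 * N"
    using h1 h2 by (simp add: algebra_simps power2_eq_square)
  hence "(norm (v - \<eta> *\<^sub>R (A *v v)))^2 \<le> ((1 - \<eta>*\<mu>) * norm v)^2"
    using sq by (simp add: power2_norm_eq_inner N_def power_mult_distrib)
  moreover have "0 \<le> (1 - \<eta>*\<mu>) * norm v"
  proof -
    have "\<eta> * (2*\<mu>) \<le> \<eta> * (L+\<mu>)" using eta mu by simp
    hence "\<eta>*\<mu> \<le> 1" using e2 by linarith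
    thus ?thesis by simp
  qed
  ultimately show ?thesis by (rule power2_le_imp_le)
qed


lemma second_diff:
  fixes f :: "real^'n \<Rightarrow> real" and df :: "real^'n \<Rightarrow> real^'n" and H :: "real^'n \<Rightarrow> real^'n^'n"
  assumes grad: "\<And>y. (f has_derivative (\<lambda>h. df y \<bullet> h)) (at y)"
    and hess: "\<And>y. (df has_derivative (\<lambda>h. H y *v h)) (at y)"
    and s: "0 < s" and bd: "\<And>z. z \<in> ball y d \<Longrightarrow> onorm (\<lambda>h. H z *v h - H y *v h) \<le> \<epsilon>"
    and sd: "s * (norm u + norm v) < d"
  shows "\<bar>f (y + s *\<^sub>R u + s *\<^sub>R v) - f (y + s *\<^sub>R u) - f (y + s *\<^sub>R v) + f y - s^2 * (u \<bullet> (H y *v v))\<bar>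
          \<le> s^2 * \<epsilon> * norm u * norm v"
proof -
  define \<phi> where "\<phi> a = f (y + a *\<^sub>R u + s *\<^sub>R v) - f (y + a *\<^sub>R u)" for a
  have der: "(\<phi> has_derivative (\<lambda>t. t * ((df (y + a *\<^sub>R u + s *\<^sub>R v) - df (y + a *\<^sub>R u)) \<bullet> u))) (at a within {0..s})"
    for a
  proof -
    have d1: "((\<lambda>a. y + a *\<^sub>R u + s *\<^sub>R v) has_derivative (\<lambda>t. t *\<^sub>R u)) (at a within {0..s})"
      by (auto intro!: derivative_eq_intros)
    have d2: "((\<lambda>a. y + a *\<^sub>R u) has_derivative (\<lambda>t. t *\<^sub>R u)) (at a within {0..s})"
      by (auto intro!: derivative_eq_intros)
    have "((\<lambda>a. f (y + a *\<^sub>R u + s *\<^sub>R v) - f (y + a *\<^sub>R u)) has_derivative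
        (\<lambda>t. df (y + a *\<^sub>R u + s *\<^sub>R v) \<bullet> (t *\<^sub>R u) - df (y + a *\<^sub>R u) \<bullet> (t *\<^sub>R u))) (at a within {0..s})"
      by (rule has_derivative_diff[OF has_derivative_compose[OF d1 grad] has_derivative_compose[OF d2 grad]])
    moreover have "(\<lambda>t. df (y + a *\<^sub>R u + s *\<^sub>R v) \<bullet> (t *\<^sub>R u) - df (y + a *\<^sub>R u) \<bullet> (t *\<^sub>R u))
        = (\<lambda>t. t * ((df (y + a *\<^sub>R u + s *\<^sub>R v) - df (y + a *\<^sub>R u)) \<bullet> u))"
      by (auto simp: inner_diff_left algebra_simps)
    ultimately show ?thesis unfolding \<phi>_def by simp
  qed
  obtain a where a: "a \<in> {0<..<s}"
    and mv: "\<phi> s - \<phi> 0 = (s - 0) * ((df (y + a *\<^sub>R u + s *\<^sub>R v) - df (y + a *\<^sub>R u)) \<bullet> u)"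
    using mvt_simple[OF s der] by blast
  define p where "p = y + a *\<^sub>R u"
  define D where "D = df (p + s *\<^sub>R v) - df p"
  have mv2: "f (y + s *\<^sub>R u + s *\<^sub>R v) - f (y + s *\<^sub>R u) - f (y + s *\<^sub>R v) + f y = s * (D \<bullet> u)"
    using mv unfolding \<phi>_def D_def p_def by (simp add: add.assoc)
  have lin: "norm (df (p + s *\<^sub>R v) - df p - H y *v ((p + s *\<^sub>R v) - p)) \<le> norm ((p + s *\<^sub>R v) - p) * \<epsilon>"
  proof (rule differentiable_bound_linearization[where S="ball y d" and f'="\<lambda>x h. H x *v h"])
    fix t :: real assume t: "t \<in> {0..1}"
    have "norm (a *\<^sub>R u + (t * s) *\<^sub>R v) \<le> a * norm u + (t * s) * norm v"
      using a t s by (auto intro!: order_trans[OF norm_triangle_ineq])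
    also have "\<dots> \<le> s * norm u + s * norm v"
      using a t s by (intro add_mono mult_right_mono) (auto simp: mult_le_cancel_right1 mult_left_le_one_le)
    also have "\<dots> < d" using sd by (simp add: algebra_simps)
    finally have nb: "norm (a *\<^sub>R u + (t * s) *\<^sub>R v) < d" .
    have eq: "p + t *\<^sub>R (p + s *\<^sub>R v - p) - y = a *\<^sub>R u + (t * s) *\<^sub>R v"
      by (simp add: p_def algebra_simps)
    show "p + t *\<^sub>R (p + s *\<^sub>R v - p) \<in> ball y d"
      unfolding mem_ball dist_norm norm_minus_commute[of y] eq using nb .
  next
    fix x assume "x \<in> ball y d"
    show "(df has_derivative (\<lambda>h. H x *v h)) (at x within ball y d)"
      using hess by (rule has_derivative_at_withinI)
  next
    fix x assume "x \<in> ball y d"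
    thus "onorm ((\<lambda>h. H x *v h) - (\<lambda>h. H y *v h)) \<le> \<epsilon>" using bd by (simp add: fun_diff_def)
  next
    have "0 \<le> s * (norm u + norm v)" using s by simp
    thus "y \<in> ball y d" using sd by simp
  qed
  hence lin2: "norm (D - s *\<^sub>R (H y *v v)) \<le> s * norm v * \<epsilon>"
    using s by (simp add: D_def matrix_vector_mult_scaleR)
  have "\<bar>D \<bullet> u - s * (u \<bullet> (H y *v v))\<bar> = \<bar>(D - s *\<^sub>R (H y *v v)) \<bullet> u\<bar>"
    by (simp add: inner_diff_right inner_commute[of _ u])
  also have "\<dots> \<le> norm (D - s *\<^sub>R (H y *v v)) * norm u" by (rule Cauchy_Schwarz_ineq2)
  also have "\<dots> \<le> s * norm v * \<epsilon> * norm u" using lin2 by (simp add: mult_right_mono)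
  finally have "s * \<bar>D \<bullet> u - s * (u \<bullet> (H y *v v))\<bar> \<le> s * (s * norm v * \<epsilon> * norm u)"
    using s by simp
  moreover have "s * \<bar>D \<bullet> u - s * (u \<bullet> (H y *v v))\<bar> = \<bar>s * (D \<bullet> u) - s^2 * (u \<bullet> (H y *v v))\<bar>"
  proof -
    have "s * (D \<bullet> u) - s^2 * (u \<bullet> (H y *v v)) = s * (D \<bullet> u - s * (u \<bullet> (H y *v v)))"
      by (simp add: power2_eq_square right_diff_distrib)
    thus ?thesis using s by (simp add: abs_mult)
  qed
  ultimately show ?thesis unfolding mv2 by (simp add: power2_eq_square mult_ac)
qed


lemma onorm_mat_le: "onorm (\<lambda>h. (M::real^'n^'m) *v h) \<le> real CARD('m) * real CARD('n) * norm M"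
proof -
  have "onorm ((*v) M) \<le> real CARD('m) * real CARD('n) * norm M"
  proof (rule onorm_le_matrix_component)
    fix i j
    have "\<bar>M $ i $ j\<bar> \<le> norm (M $ i)" by (rule component_le_norm_cart)
    also have "\<dots> \<le> norm M" by (rule Finite_Cartesian_Product.norm_nth_le)
    finally show "\<bar>M $ i $ j\<bar> \<le> norm M" .
  qed
  thus ?thesis by simp
qed

lemma hess_sym:
  fixes f :: "real^'n \<Rightarrow> real" and df :: "real^'n \<Rightarrow> real^'n" and H :: "real^'n \<Rightarrow> real^'n^'n"
  assumes grad: "\<And>y. (f has_derivative (\<lambda>h. df y \<bullet> h)) (at y)"
    and hess: "\<And>y. (df has_derivative (\<lambda>h. H y *v h)) (at y)"
    and hc: "continuous_on UNIV H"
  shows "u \<bullet> (H y *v v) = v \<bullet> (H y *v u)"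
proof -
  define c where "c = u \<bullet> (H y *v v) - v \<bullet> (H y *v u)"
  define C where "C = real CARD('n) * real CARD('n)"
  have Cp: "C > 0" unfolding C_def by simp
  have bnd: "\<bar>c\<bar> \<le> 2 * \<epsilon> * norm u * norm v" if ep: "\<epsilon> > 0" for \<epsilon>
  proof -
    obtain d where dp: "d > 0" and dH: "\<And>z. dist z y < d \<Longrightarrow> dist (H z) (H y) < \<epsilon> / C"
      using hc ep Cp unfolding continuous_on_iff by (metis UNIV_I divide_pos_pos)
    have bd: "onorm (\<lambda>h. H z *v h - H y *v h) \<le> \<epsilon>" if "z \<in> ball y d" for z
    proof -
      have "onorm (\<lambda>h. H z *v h - H y *v h) = onorm (\<lambda>h. (H z - H y) *v h)"
        by (simp add: matrix_vector_mult_diff_rdistrib)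
      also have "\<dots> \<le> C * norm (H z - H y)" unfolding C_def by (rule onorm_mat_le)
      also have "\<dots> \<le> C * (\<epsilon> / C)"
        using dH[of z] that Cp by (intro mult_left_mono) (auto simp: dist_norm norm_minus_commute[of y z] less_imp_le)
      also have "\<dots> = \<epsilon>" using Cp by simp
      finally show ?thesis .
    qed
    define s where "s = d / (2 * (norm u + norm v + 1))"
    have np: "norm u + norm v + 1 > 0" by (smt (verit) norm_ge_zero)
    hence "0 < 2 * (norm u + norm v + 1)" by simp
    hence sp: "s > 0" using dp unfolding s_def by (rule divide_pos_pos[rotated])
    have sd: "s * (norm u + norm v) < d"
    proof -
      have "s * (norm u + norm v) \<le> s * (norm u + norm v + 1)" using sp by simp
      also have "\<dots> = d / 2" unfolding s_def using np by (simp add: field_simps)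
      finally show ?thesis using dp by simp
    qed
    have sd2: "s * (norm v + norm u) < d" using sd by (simp add: add.commute)
    note h1 = second_diff[OF grad hess sp bd sd]
    note h2 = second_diff[OF grad hess sp bd sd2]
    have eqf: "f (y + s *\<^sub>R v + s *\<^sub>R u) = f (y + s *\<^sub>R u + s *\<^sub>R v)" by (simp add: add_ac)
    have X: "s^2 * \<epsilon> * norm v * norm u = s^2 * \<epsilon> * norm u * norm v" by (simp add: mult_ac)
    have "s^2 * c = s^2 * (u \<bullet> (H y *v v)) - s^2 * (v \<bullet> (H y *v u))" unfolding c_def by (simp add: right_diff_distrib)
    hence "\<bar>s^2 * c\<bar> \<le> 2 * (s^2 * \<epsilon> * norm u * norm v)"
      using h1 h2 unfolding eqf X abs_le_iff by linarith
    hence "s^2 * \<bar>c\<bar> \<le> s^2 * (2 * \<epsilon> * norm u * norm v)" by (simp add: abs_mult mult_ac)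
    thus ?thesis using sp by simp
  qed
  have "\<bar>c\<bar> \<le> 0"
  proof (rule ccontr)
    assume "\<not> \<bar>c\<bar> \<le> 0"
    hence cp: "\<bar>c\<bar> > 0" by simp
    define K where "K = 2 * norm u * norm v + 1"
    have Kp: "K > 0" by (simp add: K_def add_nonneg_pos)
    have "\<bar>c\<bar> \<le> 2 * (\<bar>c\<bar> / (2*K)) * norm u * norm v" using bnd[of "\<bar>c\<bar> / (2*K)"] cp Kp by simp
    also have "\<dots> = \<bar>c\<bar> / 2 * ((2 * norm u * norm v) / K)" using Kp by (simp add: field_simps)
    also have "\<dots> \<le> \<bar>c\<bar> / 2 * 1" using Kp cp by (intro mult_left_mono) (auto simp: K_def)
    finally show False using cp by simp
  qed
  thus ?thesis unfolding c_def by simp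
qed


lemma ridge:
  fixes U :: "nat \<Rightarrow> real^'n" and g :: "real^'n" and a :: "nat \<Rightarrow> real"
  assumes fin: "finite W" and ne: "\<And>i. i \<in> W \<Longrightarrow> (\<Sum>j\<in>W. (U i \<bullet> U j) * a j) + lam * a i = U i \<bullet> g"
    and lam: "lam > 0"
  shows "norm (g - (\<Sum>j\<in>W. a j *\<^sub>R U j)) \<le> norm g" "\<And>i. i \<in> W \<Longrightarrow> \<bar>a i\<bar> * sqrt lam \<le> norm g"
proof -
  define V where "V = (\<Sum>j\<in>W. a j *\<^sub>R U j)"
  define Q where "Q = (\<Sum>i\<in>W. (a i)^2)"
  have "V \<bullet> V = (\<Sum>i\<in>W. a i * (U i \<bullet> V))"
    unfolding V_def[of ] by (simp add: inner_sum_left)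
  also have "\<dots> = (\<Sum>i\<in>W. a i * (\<Sum>j\<in>W. (U i \<bullet> U j) * a j))"
    unfolding V_def by (simp add: inner_sum_right mult_ac)
  also have "\<dots> = (\<Sum>i\<in>W. a i * (U i \<bullet> g - lam * a i))"
    by (rule sum.cong) (auto simp: ne[symmetric])
  also have "\<dots> = V \<bullet> g - lam * Q"
    unfolding V_def Q_def by (simp add: inner_sum_left right_diff_distrib sum_subtractf sum_distrib_left power2_eq_square mult_ac)
  finally have key: "V \<bullet> V + lam * Q = V \<bullet> g" by simp
  have Q0: "0 \<le> Q" unfolding Q_def by (simp add: sum_nonneg)
  have cs: "V \<bullet> g \<le> norm V * norm g" by (rule order_trans[OF _ Cauchy_Schwarz_ineq2]) simp
  have nv: "V \<bullet> V = (norm V)^2" "g \<bullet> g = (norm g)^2" by (simp_all add: power2_norm_eq_inner)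
  have "(norm (g - V))^2 = g \<bullet> g - 2 * (V \<bullet> g) + V \<bullet> V"
    by (simp add: power2_norm_eq_inner inner_diff_left inner_diff_right inner_commute)
  also have "\<dots> \<le> (norm g)^2"
  proof -
    have "0 \<le> lam * Q" using Q0 lam by simp
    moreover have "0 \<le> V \<bullet> V" by simp
    ultimately show ?thesis using key nv(2) by linarith
  qed
  finally show "norm (g - (\<Sum>j\<in>W. a j *\<^sub>R U j)) \<le> norm g"
    unfolding V_def[symmetric] by (rule power2_le_imp_le) simp
  fix i assume i: "i \<in> W"
  have "lam * Q \<le> (norm g)^2"
  proof -
    have "0 \<le> (norm V - norm g)^2" by simp
    hence "2 * (norm V * norm g) \<le> (norm V)^2 + (norm g)^2" by (simp add: power2_eq_square algebra_simps)
    moreover have "0 \<le> (norm V)^2" "0 \<le> (norm g)^2" by simp_all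
    ultimately show ?thesis using key cs nv by linarith
  qed
  moreover have "(a i)^2 \<le> Q"
    unfolding Q_def using i fin by (intro member_le_sum) auto
  hence "lam * (a i)^2 \<le> lam * Q" using lam by (intro mult_left_mono) auto
  ultimately have "lam * (a i)^2 \<le> (norm g)^2" by linarith
  hence "(\<bar>a i\<bar> * sqrt lam)^2 \<le> (norm g)^2" using lam by (simp add: power_mult_distrib mult_ac)
  thus "\<bar>a i\<bar> * sqrt lam \<le> norm g" by (rule power2_le_imp_le) simp
qed


lemma mv_sum: "(A::real^'n^'m) *v (\<Sum>j\<in>W. w j) = (\<Sum>j\<in>W. A *v w j)"
  by (induction W rule: infinite_finite_induct) (simp_all add: matrix_vector_right_distrib)

lemma aa_identity:
  fixes df :: "real^'n \<Rightarrow> real^'n" and A :: "real^'n^'n" and x :: "nat \<Rightarrow> real^'n" and a :: "nat \<Rightarrow> real"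
  assumes step: "x (Suc k) = (\<Sum>j\<in>W. a j *\<^sub>R G (x j)) + (1 - (\<Sum>j\<in>W. a j)) *\<^sub>R G (x k)"
    and G: "G = (\<lambda>y. y - \<eta> *\<^sub>R df y)"
    and e: "e = (\<lambda>y. df y - A *v (y - xs))"
    and P: "P = df (x k) - (\<Sum>j\<in>W. a j *\<^sub>R (df (x k) - df (x j)))"
  shows "df (x (Suc k)) = (P - \<eta> *\<^sub>R (A *v P)) + e (x (Suc k)) - e (x k) + (\<Sum>j\<in>W. a j *\<^sub>R (e (x k) - e (x j)))"
proof -
  define g where "g = (\<lambda>j. df (x j))"
  define V where "V = (\<Sum>j\<in>W. a j *\<^sub>R (g k - g j))"
  have s0: "(1 - (\<Sum>j\<in>W. a j)) *\<^sub>R G (x k) = G (x k) - (\<Sum>j\<in>W. a j *\<^sub>R G (x k))"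
    by (simp add: scaleR_diff_left scaleR_sum_left)
  have s1: "x (Suc k) = G (x k) + (\<Sum>j\<in>W. a j *\<^sub>R (G (x j) - G (x k)))"
    unfolding step s0 by (simp add: scaleR_diff_right sum_subtractf)
  have s2: "x (Suc k) - xs = (x k - xs) - \<eta> *\<^sub>R g k + (\<Sum>j\<in>W. a j *\<^sub>R ((x j - x k) - \<eta> *\<^sub>R (g j - g k)))"
    unfolding s1 G g_def by (simp add: algebra_simps)
  have Ai: "A *v (y - xs) = df y - e y" for y unfolding e by simp
  have Ai2: "A *v y - A *v xs = df y - e y" for y unfolding e by (simp add: matrix_vector_mult_diff_distrib)
  have s3: "A *v (x (Suc k) - xs) = (g k - e (x k)) - \<eta> *\<^sub>R (A *v g k)
      + (\<Sum>j\<in>W. a j *\<^sub>R (A *v (x j - x k) - \<eta> *\<^sub>R (A *v (g j - g k))))"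
    unfolding s2 by (simp add: matrix_vector_right_distrib matrix_vector_mult_diff_distrib mv_sum
        matrix_vector_mult_scaleR Ai Ai2 g_def)
  have pt: "A *v (x j - x k) - \<eta> *\<^sub>R (A *v (g j - g k)) = - (g k - g j) + \<eta> *\<^sub>R (A *v (g k - g j)) + (e (x k) - e (x j))"
    for j
  proof -
    have "x j - x k = (x j - xs) - (x k - xs)" by simp
    hence "A *v (x j - x k) = A *v (x j - xs) - A *v (x k - xs)"
      by (metis matrix_vector_mult_diff_distrib)
    hence "A *v (x j - x k) = (g j - e (x j)) - (g k - e (x k))"
      by (simp only: Ai g_def)
    moreover have "A *v (g j - g k) = - (A *v (g k - g j))"
      by (metis matrix_vector_mult_diff_distrib minus_diff_eq)
    ultimately show ?thesis by (simp add: algebra_simps)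
  qed
  have s4: "(\<Sum>j\<in>W. a j *\<^sub>R (A *v (x j - x k) - \<eta> *\<^sub>R (A *v (g j - g k))))
      = - V + \<eta> *\<^sub>R (A *v V) + (\<Sum>j\<in>W. a j *\<^sub>R (e (x k) - e (x j)))"
    unfolding pt V_def
    by (simp add: scaleR_right_distrib sum.distrib sum_negf mv_sum matrix_vector_mult_scaleR scaleR_sum_right
        scaleR_right_diff_distrib sum_subtractf algebra_simps)
  have PV: "P = g k - V" unfolding P V_def g_def by simp
  have "df (x (Suc k)) = A *v (x (Suc k) - xs) + e (x (Suc k))" unfolding e by simp
  also have "\<dots> = (P - \<eta> *\<^sub>R (A *v P)) + e (x (Suc k)) - e (x k) + (\<Sum>j\<in>W. a j *\<^sub>R (e (x k) - e (x j)))"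
    unfolding s3 s4 PV by (simp add: matrix_vector_mult_diff_distrib algebra_simps)
  finally show ?thesis .
qed


theorem theorem3p2:
  fixes f :: "real^'n \<Rightarrow> real"
    and df :: "real^'n \<Rightarrow> real^'n"
    and H :: "real^'n \<Rightarrow> real^'n^'n"
    and \<mu> L \<eta> lam :: real and m :: nat
    and x0 xs :: "real^'n" and x :: "nat \<Rightarrow> real^'n" and \<alpha> :: "nat \<Rightarrow> nat \<Rightarrow> real"
  assumes grad: "\<And>y. (f has_derivative (\<lambda>h. df y \<bullet> h)) (at y)"
    and hess: "\<And>y. (df has_derivative (\<lambda>h. H y *v h)) (at y)"
    and hess_cont: "continuous_on UNIV H"
    and eig: "\<And>y c. is_eigenvalue (H y) c \<Longrightarrow> \<mu> \<le> c \<and> c \<le> L"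
    and mu_pos: "0 < \<mu>" and mu_L: "\<mu> \<le> L"
    and minimizer: "\<And>y. f xs \<le> f y"
    and eta_pos: "0 < \<eta>" and eta_le: "\<eta> \<le> 2 / (L + \<mu>)"
    and m_ge: "m \<ge> 1" and lam_pos: "lam > 0"
    and aa: "aa_gd df \<eta> m lam x0 x \<alpha>"
    and nonzero: "\<And>k. df (x k) \<noteq> 0"
    and conv: "x \<longlonglongrightarrow> xs"
  shows "\<exists>r :: nat \<Rightarrow> real. r \<longlonglongrightarrow> 0 \<and>
           (\<forall>\<^sub>F k in sequentially.
              norm (aa_Pi_grad df m x \<alpha> k) / norm (df (x k)) \<le> 1 \<and>
              norm (df (x (Suc k))) / norm (df (x k))
                \<le> (norm (aa_Pi_grad df m x \<alpha> k) / norm (df (x k))) * (1 - \<eta> * \<mu>) + r k)"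
proof -
  define A where "A = H xs"
  have sym: "\<And>u v. u \<bullet> (A *v v) = v \<bullet> (A *v u)" unfolding A_def
    by (rule hess_sym[OF grad hess hess_cont])
  have eigA: "\<And>c. is_eigenvalue A c \<Longrightarrow> \<mu> \<le> c \<and> c \<le> L" unfolding A_def by (rule eig)
  note lo = eig_bounds(1)[OF sym eigA] and hi = eig_bounds(2)[OF sym eigA]
  have contr: "\<And>v. norm (v - \<eta> *\<^sub>R (A *v v)) \<le> (1 - \<eta>*\<mu>) * norm v"
    by (rule contraction[OF sym lo hi mu_pos mu_L eta_pos eta_le])
  have Alow: "\<mu> * norm w \<le> norm (A *v w)" for w
  proof (cases "w = 0")
    case True thus ?thesis by simp
  next
    case False
    have "\<mu> * (norm w)^2 \<le> w \<bullet> (A *v w)" using lo[of w] by (simp add: power2_norm_eq_inner)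
    also have "\<dots> \<le> norm w * norm (A *v w)" by (rule order_trans[OF _ Cauchy_Schwarz_ineq2]) simp
    finally have "norm w * (\<mu> * norm w) \<le> norm w * norm (A *v w)" by (simp add: power2_eq_square mult_ac)
    thus ?thesis using False by simp
  qed
  have em: "\<eta> * \<mu> \<le> 1"
  proof -
    have "\<eta> * (L + \<mu>) \<le> 2" using eta_le mu_pos mu_L by (simp add: field_simps)
    moreover have "\<eta> * (2*\<mu>) \<le> \<eta> * (L+\<mu>)" using eta_pos mu_L by simp
    ultimately show ?thesis by linarith
  qed
  have em2: "0 \<le> 1 - \<eta>*\<mu>" "1 - \<eta>*\<mu> \<le> 1" using em eta_pos mu_pos by simp_all
  have dfxs: "df xs = 0"
  proof -
    have "(\<lambda>h. df xs \<bullet> h) = (\<lambda>h. 0)"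
      by (rule has_derivative_local_min[OF grad]) (simp add: minimizer always_eventually)
    hence "df xs \<bullet> df xs = 0" by metis
    thus ?thesis by simp
  qed
  have xne: "x k \<noteq> xs" for k using nonzero[of k] dfxs by auto
  define e where "e = (\<lambda>y. df y - A *v (y - xs))"
  define \<rho> where "\<rho> = (\<lambda>k. norm (e (x k)) / norm (x k - xs))"
  have e\<rho>: "norm (e (x k)) = \<rho> k * norm (x k - xs)" for k using xne[of k] by (simp add: \<rho>_def)
  have \<rho>0: "\<rho> \<longlonglongrightarrow> 0"
  proof -
    have "((\<lambda>y. norm (df y - df xs - A *v (y - xs)) / norm (y - xs)) \<longlongrightarrow> 0) (at xs)"
      using hess[of xs] unfolding has_derivative_iff_norm A_def by blast
    hence l: "((\<lambda>y. norm (e y) / norm (y - xs)) \<longlongrightarrow> 0) (at xs)" by (simp add: e_def dfxs)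
    have "filterlim x (at xs) sequentially" by (rule filterlim_atI[OF conv]) (simp add: xne)
    from filterlim_compose[OF l this] show ?thesis by (simp add: \<rho>_def o_def)
  qed
  have \<rho>nn: "0 \<le> \<rho> k" for k by (simp add: \<rho>_def)
  define E where "E = (\<lambda>k. norm (e (x k)))"
  have E0: "E \<longlonglongrightarrow> 0"
  proof -
    have "(\<lambda>k. x k - xs) \<longlonglongrightarrow> 0" using conv by (rule LIM_zero)
    hence "(\<lambda>k. norm (x k - xs)) \<longlonglongrightarrow> 0" by (simp add: tendsto_norm_zero)
    from tendsto_mult[OF \<rho>0 this] show ?thesis by (simp add: E_def e\<rho>)
  qed
  have Enn: "0 \<le> E k" for k by (simp add: E_def)
  define W where "W = aa_window m"
  have finW: "finite (W k)" for k by (simp add: W_def aa_window_def)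
  define M where "M = (\<lambda>k. \<Sum>j\<in>W k. E k + E j)"
  have M0: "M \<longlonglongrightarrow> 0"
  proof (rule LIMSEQ_I)
    fix r :: real assume r: "0 < r"
    have "0 < r / (4 * real m)" using r m_ge by simp
    from LIMSEQ_D[OF E0 this] obtain N where N: "\<And>n. n \<ge> N \<Longrightarrow> norm (E n - 0) < r / (4 * real m)"
      by blast
    show "\<exists>no. \<forall>n\<ge>no. norm (M n - 0) < r"
    proof (intro exI allI impI)
      fix n assume n: "n \<ge> N + m"
      have "M n \<le> real (card (W n)) * (r / (2 * real m))" unfolding M_def
      proof (rule sum_bounded_above)
        fix j assume j: "j \<in> W n"
        hence "j \<ge> N" using n by (auto simp: W_def aa_window_def)
        hence "E j < r / (4 * real m)" using N[of j] Enn[of j] by simp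
        moreover have "E n < r / (4 * real m)" using N[of n] Enn[of n] n by simp
        ultimately show "E n + E j \<le> r / (2 * real m)" by (simp add: field_simps)
      qed
      also have "\<dots> \<le> real m * (r / (2 * real m))"
        using r by (intro mult_right_mono) (auto simp: W_def aa_window_def)
      also have "\<dots> = r / 2" using m_ge by simp
      finally have "M n \<le> r / 2" .
      moreover have "0 \<le> M n" unfolding M_def by (intro sum_nonneg) (simp add: Enn add_nonneg_nonneg)
      ultimately show "norm (M n - 0) < r" using r by simp
    qed
  qed
  define g where "g = (\<lambda>k. df (x k))"
  have gpos: "0 < norm (g k)" for k using nonzero by (simp add: g_def)
  define P where "P = aa_Pi_grad df m x \<alpha>"
  define R where "R = (\<lambda>k. 2 * \<rho> k / \<mu> + M k / sqrt lam)"
  define t where "t = (\<lambda>k. 2 * \<rho> (Suc k) / \<mu>)"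
  define B where "B = (\<lambda>k. R k + 2 * t k * (1 + R k))"
  define q where "q = (\<lambda>k. norm (g (Suc k)) / norm (g k))"
  define dd where "dd = (\<lambda>k. norm (P k) / norm (g k) * (1 - \<eta> * \<mu>))"
  have eb: "E i \<le> (2 * \<rho> i / \<mu>) * norm (g i)" if ri: "\<rho> i \<le> \<mu>/4" for i
  proof -
    have "A *v (x i - xs) = g i - e (x i)" by (simp add: e_def g_def)
    hence "norm (A *v (x i - xs)) \<le> norm (g i) + E i" by (simp add: E_def norm_triangle_ineq4)
    hence "\<mu> * norm (x i - xs) \<le> norm (g i) + \<rho> i * norm (x i - xs)"
      using Alow[of "x i - xs"] by (simp add: E_def e\<rho>)
    moreover have "\<rho> i * norm (x i - xs) \<le> (\<mu>/2) * norm (x i - xs)"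
      using ri mu_pos by (intro mult_right_mono) auto
    ultimately have "norm (x i - xs) \<le> 2 * norm (g i) / \<mu>" using mu_pos by (simp add: field_simps)
    hence "\<rho> i * norm (x i - xs) \<le> \<rho> i * (2 * norm (g i) / \<mu>)" by (rule mult_left_mono) (rule \<rho>nn)
    moreover have "\<rho> i * (2 * norm (g i) / \<mu>) = (2 * \<rho> i / \<mu>) * norm (g i)" by (simp add: field_simps)
    ultimately show ?thesis unfolding E_def e\<rho> by linarith
  qed
  have main: "norm (P k) \<le> norm (g k) \<and> q k - dd k \<le> B k \<and> 0 \<le> B k"
    if k1: "k \<ge> 1" and r1: "\<rho> k \<le> \<mu>/4" and r2: "\<rho> (Suc k) \<le> \<mu>/4" for k
  proof -
    have aak: "(\<forall>i\<in>W k. (\<Sum>j\<in>W k. (aa_U df x k i \<bullet> aa_U df x k j) * \<alpha> k j) + lam * \<alpha> k i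
              = aa_U df x k i \<bullet> df (x k)) \<and>
         x (Suc k) = (\<Sum>j\<in>W k. \<alpha> k j *\<^sub>R (\<lambda>y. y - \<eta> *\<^sub>R df y) (x j))
                     + (1 - (\<Sum>j\<in>W k. \<alpha> k j)) *\<^sub>R (\<lambda>y. y - \<eta> *\<^sub>R df y) (x k)"
      using aa k1 unfolding aa_gd_def Let_def W_def by blast
    have Pk: "P k = df (x k) - (\<Sum>j\<in>W k. \<alpha> k j *\<^sub>R aa_U df x k j)"
      by (simp add: P_def aa_Pi_grad_def W_def)
    have r1': "norm (P k) \<le> norm (g k)" unfolding Pk g_def
      by (rule ridge(1)[OF finW]) (use aak lam_pos in auto)
    have al: "\<bar>\<alpha> k j\<bar> * sqrt lam \<le> norm (g k)" if "j \<in> W k" for j unfolding g_def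
      by (rule ridge(2)[OF finW _ lam_pos that]) (use aak in auto)
    have idn: "df (x (Suc k)) = (P k - \<eta> *\<^sub>R (A *v P k)) + e (x (Suc k)) - e (x k)
        + (\<Sum>j\<in>W k. \<alpha> k j *\<^sub>R (e (x k) - e (x j)))"
      by (rule aa_identity[OF conjunct2[OF aak] refl e_def]) (simp add: Pk aa_U_def)
    define n where "n = norm (g k)"
    define n1 where "n1 = norm (g (Suc k))"
    have np: "n > 0" using gpos by (simp add: n_def)
    have sl: "sqrt lam > 0" using lam_pos by simp
    have sumb: "norm (\<Sum>j\<in>W k. \<alpha> k j *\<^sub>R (e (x k) - e (x j))) \<le> n / sqrt lam * M k"
    proof -
      have "norm (\<Sum>j\<in>W k. \<alpha> k j *\<^sub>R (e (x k) - e (x j))) \<le> (\<Sum>j\<in>W k. norm (\<alpha> k j *\<^sub>R (e (x k) - e (x j))))"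
        by (rule norm_sum)
      also have "\<dots> \<le> (\<Sum>j\<in>W k. n / sqrt lam * (E k + E j))"
      proof (rule sum_mono)
        fix j assume j: "j \<in> W k"
        have "\<bar>\<alpha> k j\<bar> \<le> n / sqrt lam" using al[OF j] sl by (simp add: n_def field_simps)
        moreover have "norm (e (x k) - e (x j)) \<le> E k + E j" unfolding E_def by (rule norm_triangle_ineq4)
        ultimately have "\<bar>\<alpha> k j\<bar> * norm (e (x k) - e (x j)) \<le> n / sqrt lam * (E k + E j)"
          by (rule mult_mono) (use np sl in auto)
        thus "norm (\<alpha> k j *\<^sub>R (e (x k) - e (x j))) \<le> n / sqrt lam * (E k + E j)" by simp
      qed
      also have "\<dots> = n / sqrt lam * M k" by (simp add: M_def sum_distrib_left)
      finally show ?thesis .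
    qed
    have "n1 \<le> norm (P k - \<eta> *\<^sub>R (A *v P k)) + E (Suc k) + E k + norm (\<Sum>j\<in>W k. \<alpha> k j *\<^sub>R (e (x k) - e (x j)))"
      unfolding n1_def g_def idn E_def
      by (smt (verit, best) norm_triangle_ineq norm_triangle_ineq4)
    moreover have "norm (P k - \<eta> *\<^sub>R (A *v P k)) \<le> (1 - \<eta>*\<mu>) * norm (P k)" by (rule contr)
    moreover have "E (Suc k) \<le> t k * n1" using eb[OF r2] by (simp add: t_def n1_def)
    moreover have "E k \<le> (2 * \<rho> k / \<mu>) * n" using eb[OF r1] by (simp add: n_def)
    ultimately have ineq: "n1 \<le> (1 - \<eta>*\<mu>) * norm (P k) + t k * n1 + R k * n"
      using sumb unfolding R_def by (simp add: algebra_simps)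
    define c where "c = (1 - \<eta>*\<mu>) * norm (P k)"
    have "(1 - \<eta>*\<mu>) * norm (P k) \<le> norm (P k)" by (rule mult_left_le_one_le) (use em2 in auto)
    hence cn: "c \<le> n" unfolding c_def n_def using r1' by linarith
    have t0: "0 \<le> t k" "t k \<le> 1/2" using r2 mu_pos \<rho>nn[of "Suc k"] by (auto simp: t_def field_simps)
    have R0: "0 \<le> R k" using \<rho>nn[of k] mu_pos sl unfolding R_def M_def
      by (intro add_nonneg_nonneg divide_nonneg_pos sum_nonneg) (auto simp: Enn add_nonneg_nonneg)
    have n10: "0 \<le> n1" by (simp add: n1_def)
    have "n1 * (1/2) \<le> n1 * (1 - t k)" using t0 n10 by (intro mult_left_mono) auto
    hence "n1 \<le> 2 * (c + R k * n)" using ineq unfolding c_def by (simp add: algebra_simps)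
    also have "\<dots> \<le> 2 * (1 + R k) * n" using cn by (simp add: algebra_simps)
    finally have "t k * n1 \<le> t k * (2 * (1 + R k) * n)" using t0 by (intro mult_left_mono) auto
    hence "n1 - c \<le> (R k + 2 * t k * (1 + R k)) * n" using ineq unfolding c_def by (simp add: algebra_simps)
    hence "(n1 - c) / n \<le> B k" using np unfolding B_def by (simp add: field_simps)
    moreover have "(n1 - c) / n = q k - dd k" unfolding q_def dd_def n1_def n_def c_def
      using np by (simp add: field_simps n_def)
    moreover have "0 \<le> B k" unfolding B_def using R0 t0 by simp
    ultimately show ?thesis using r1' by simp
  qed
  define r where "r = (\<lambda>k. max 0 (q k - dd k))"
  have ev: "\<forall>\<^sub>F k in sequentially. k \<ge> 1 \<and> \<rho> k \<le> \<mu>/4 \<and> \<rho> (Suc k) \<le> \<mu>/4"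
  proof -
    have "0 < \<mu>/4" using mu_pos by simp
    from order_tendstoD(2)[OF \<rho>0 this] have a: "\<forall>\<^sub>F k in sequentially. \<rho> k < \<mu>/4" .
    have b: "\<forall>\<^sub>F k in sequentially. \<rho> (Suc k) < \<mu>/4" using a by (rule eventually_sequentially_Suc[THEN iffD2])
    show ?thesis using a b eventually_ge_at_top[of 1] by eventually_elim auto
  qed
  have B0: "B \<longlonglongrightarrow> 0"
  proof -
    have "(\<lambda>k. \<rho> (Suc k)) \<longlonglongrightarrow> 0" using \<rho>0 by (rule LIMSEQ_Suc)
    hence t0: "t \<longlonglongrightarrow> 0" unfolding t_def using mu_pos by (auto intro!: tendsto_eq_intros)
    have R0: "R \<longlonglongrightarrow> 0" unfolding R_def using \<rho>0 M0 mu_pos lam_pos by (auto intro!: tendsto_eq_intros)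
    show ?thesis unfolding B_def using t0 R0 by (auto intro!: tendsto_eq_intros)
  qed
  have r0: "r \<longlonglongrightarrow> 0"
  proof (rule tendsto_sandwich[OF _ _ tendsto_const B0])
    show "\<forall>\<^sub>F k in sequentially. 0 \<le> r k" by (simp add: r_def)
    show "\<forall>\<^sub>F k in sequentially. r k \<le> B k" using ev
    proof eventually_elim
      case (elim k)
      hence "q k - dd k \<le> B k" "0 \<le> B k" using main by blast+
      thus ?case by (simp add: r_def)
    qed
  qed
  show ?thesis
  proof (intro exI conjI)
    show "r \<longlonglongrightarrow> 0" by (rule r0)
    show "\<forall>\<^sub>F k in sequentially.
              norm (aa_Pi_grad df m x \<alpha> k) / norm (df (x k)) \<le> 1 \<and>
              norm (df (x (Suc k))) / norm (df (x k))
                \<le> (norm (aa_Pi_grad df m x \<alpha> k) / norm (df (x k))) * (1 - \<eta> * \<mu>) + r k"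
      using ev
    proof eventually_elim
      case (elim k)
      hence "norm (P k) \<le> norm (g k)" using main by blast
      hence "norm (P k) / norm (g k) \<le> 1" using gpos[of k] by simp
      moreover have "q k \<le> dd k + r k" by (simp add: r_def)
      ultimately show ?case by (simp add: P_def g_def q_def dd_def)
    qed
  qed
qed

end
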